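(* Let $\underline{t}$ be an increment array of size $s$ for $n$ agents, with period $\pi(\underline{t})$. Then for all $1\le i\le j\le n$, \[C(i,\underline{t})=C(j,\underline{t})\iff \exists\, r\in\mathbb{Z},\ 0\le r\le \frac{(n-i)s}{n\,\pi(\underline{t})}\ :\ j=i+r\cdot\frac{n\,\pi(\underline{t})}{s}.\]
   Context: Agent identifiers are $\{1,\ldots,n\}$, arithmetic on identifiers is modulo $n$ with representatives in $\{1,\ldots,n\}$ (a value $0$ is replaced by $n$). An increment array (IA) of size $s$ ($1\le s\le n$) for $n$ agents is a tuple $\underline{t}=\langle t_0,\ldots,t_{s-1}\rangle$ of non-negative integers with $\sum t_i=n-s$. Cumulative increments: $\varphi_1=0$, $\varphi_i=\sum_{k=0}^{i-2}(t_k+1)$ for $2\le i\le s+1$. The coalition generated from $x$ is $C(x,\underline{t})=\{x\}\cup\bigcup_{i=2}^{s}\{(x+\varphi_i)\bmod n\}$ (residues in $\{1,\ldots,n\}$). The period $\pi(\underline{t})$ is the least $p\in\{1,\ldots,s\}$ such that $\underline{t}$ consists of $s/p$ identical consecutive copies of its prefix $\langle t_0,\ldots,t_{p-1}\rangle$ (in particular $p\mid s$). *)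

theory Defs
  imports Complex_Main
begin

definition modn :: "nat \<Rightarrow> int \<Rightarrow> nat" where
  "modn n x = (if x mod int n = 0 then n else nat (x mod int n))"

definition is_IA :: "nat \<Rightarrow> nat \<Rightarrow> nat list \<Rightarrow> bool" where
  "is_IA n s t \<longleftrightarrow> 1 \<le> s \<and> s \<le> n \<and> length t = s \<and> sum_list t = n - s"

definition phi :: "nat list \<Rightarrow> nat \<Rightarrow> nat" where
  "phi t i = (\<Sum>k = 0..<i - 1. t ! k + 1)"

definition coalition :: "nat \<Rightarrow> nat \<Rightarrow> nat list \<Rightarrow> nat set" where
  "coalition n x t = {x} \<union> (\<Union>i\<in>{2..length t}. {modn n (int x + int (phi t i))})"

definition is_period :: "nat list \<Rightarrow> nat \<Rightarrow> bool" where
  "is_period t p \<longleftrightarrow> 1 \<le> p \<and> p \<le> length t \<and> p dvd length t \<and>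
     t = concat (replicate (length t div p) (take p t))"

definition period :: "nat list \<Rightarrow> nat" where
  "period t = (LEAST p. is_period t p)"

end

theory Submission imports Defs "HOL-Number_Theory.Cong" begin

definition TT :: "nat list \<Rightarrow> nat \<Rightarrow> nat" where "TT t l = t ! (l mod length t)"
definition PP :: "nat list \<Rightarrow> nat \<Rightarrow> nat" where "PP t l = (\<Sum>j<l. TT t j + 1)"
definition PerT :: "nat list \<Rightarrow> nat \<Rightarrow> bool" where "PerT t a \<longleftrightarrow> (\<forall>l. TT t (l + a) = TT t l)"

lemma PP_Suc: "PP t (Suc l) = PP t l + TT t l + 1"
  by (simp add: PP_def)

lemma PP_0[simp]: "PP t 0 = 0" by (simp add: PP_def)

lemma PP_smono: "strict_mono (PP t)"
  by (simp add: strict_mono_Suc_iff PP_Suc)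

lemma PP_len: "PP t (length t) = sum_list t + length t"
proof -
  have "PP t (length t) = (\<Sum>j<length t. t ! j + 1)"
    unfolding PP_def TT_def by (rule sum.cong) auto
  also have "\<dots> = sum_list t + length t"
    by (simp only: sum.distrib sum_list_sum_nth atLeast0LessThan) simp
  finally show ?thesis .
qed

lemma PerT_len: "PerT t (length t)"
  by (simp add: PerT_def TT_def)

lemma PerT_shift: "PerT t p \<Longrightarrow> PP t (l + p) = PP t l + PP t p"
proof (induction l)
  case 0 then show ?case by simp
next
  case (Suc l)
  have "TT t (l + p) = TT t l" using Suc.prems by (simp add: PerT_def)
  then show ?case using Suc by (simp add: PP_Suc)
qed

lemma PerT_mult: "PerT t p \<Longrightarrow> PerT t (c * p)"
proof (induction c)
  case 0 then show ?case by (simp add: PerT_def)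
next
  case (Suc c)
  then show ?case unfolding PerT_def by (metis add.assoc mult_Suc)
qed

lemma PP_mult: "PerT t p \<Longrightarrow> PP t (c * p) = c * PP t p"
proof (induction c)
  case 0 then show ?case by simp
next
  case (Suc c)
  then show ?case using PerT_shift[of t p "c*p"] by (simp add: add.commute)
qed

lemma PerT_gcd: assumes "PerT t a" "PerT t b" shows "PerT t (gcd a b)"
proof (cases "a = 0")
  case True then show ?thesis using assms by simp
next
  case False
  then obtain x y where xy: "a * x = b * y + gcd a b" using bezout_nat by blast
  have "TT t (l + gcd a b) = TT t l" for l
  proof -
    have "TT t (l + gcd a b) = TT t (l + gcd a b + y * b)"
      using PerT_mult[OF assms(2), of y] by (simp add: PerT_def)
    also have "\<dots> = TT t (l + x * a)" using xy by (simp add: algebra_simps)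
    also have "\<dots> = TT t l" using PerT_mult[OF assms(1), of x] by (simp add: PerT_def)
    finally show ?thesis .
  qed
  then show ?thesis by (simp add: PerT_def)
qed

lemma PerT_mod: "PerT t p \<Longrightarrow> TT t l = TT t (l mod p)"
proof -
  assume p: "PerT t p"
  have "TT t (l mod p + (l div p) * p) = TT t (l mod p)"
    using PerT_mult[OF p, of "l div p"] unfolding PerT_def by blast
  then show ?thesis by (simp only: mod_div_mult_eq)
qed

lemma nth_concat_replicate:
  "l < q * length u \<Longrightarrow> concat (replicate q u) ! l = u ! (l mod length u)"
proof (induction q arbitrary: l)
  case 0 then show ?case by simp
next
  case (Suc q)
  show ?case
  proof (cases "l < length u")
    case True then show ?thesis by (simp add: nth_append)
  next
    case False
    then have "concat (replicate (Suc q) u) ! l = concat (replicate q u) ! (l - length u)"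
      by (simp add: nth_append)
    also have "\<dots> = u ! ((l - length u) mod length u)" using Suc False by simp
    also have "(l - length u) mod length u = l mod length u"
      using False by (simp add: mod_if)
    finally show ?thesis .
  qed
qed

lemma is_period_iff:
  assumes "t \<noteq> []"
  shows "is_period t p \<longleftrightarrow> 1 \<le> p \<and> p \<le> length t \<and> p dvd length t \<and> PerT t p"
proof
  assume ip: "is_period t p"
  then have p: "1 \<le> p" "p \<le> length t" "p dvd length t" and eq: "t = concat (replicate (length t div p) (take p t))"
    by (auto simp: is_period_def)
  have nth: "t ! l = t ! (l mod p)" if "l < length t" for l
  proof -
    have "t ! l = concat (replicate (length t div p) (take p t)) ! l" using eq by simp
    also have "\<dots> = take p t ! (l mod p)"
      using nth_concat_replicate[of l "length t div p" "take p t"] p that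
      by (simp add: min_def)
    also have "\<dots> = t ! (l mod p)" using p
      by (metis le_eq_less_or_eq less_le_trans mod_less_divisor nth_take zero_less_one)
    finally show ?thesis .
  qed
  have "TT t l = t ! (l mod p)" for l
  proof -
    have "TT t l = t ! (l mod length t mod p)" unfolding TT_def using nth assms by simp
    also have "l mod length t mod p = l mod p" using p(3) by (simp add: mod_mod_cancel)
    finally show ?thesis .
  qed
  then have "PerT t p" unfolding PerT_def by simp
  with p show "1 \<le> p \<and> p \<le> length t \<and> p dvd length t \<and> PerT t p" by simp
next
  assume h: "1 \<le> p \<and> p \<le> length t \<and> p dvd length t \<and> PerT t p"
  have "t = concat (replicate (length t div p) (take p t))"
  proof (rule nth_equalityI)
    show "length t = length (concat (replicate (length t div p) (take p t)))"
      using h by (cases "p = length t") (auto simp: length_concat sum_list_replicate min_def)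
    fix l assume l: "l < length t"
    have lt: "length (take p t) = p" using h by simp
    have "l < (length t div p) * length (take p t)" using lt h l by simp
    from nth_concat_replicate[OF this]
    have "concat (replicate (length t div p) (take p t)) ! l = take p t ! (l mod p)"
      unfolding lt .
    also have "\<dots> = t ! (l mod p)" using h
      by (metis le_eq_less_or_eq less_le_trans mod_less_divisor nth_take zero_less_one)
    also have "\<dots> = TT t (l mod p)" unfolding TT_def using h
      by (metis le_eq_less_or_eq less_le_trans mod_less mod_less_divisor zero_less_one)
    also have "\<dots> = TT t l" using PerT_mod h by metis
    also have "\<dots> = t ! l" using l by (simp add: TT_def)
    finally show "t ! l = concat (replicate (length t div p) (take p t)) ! l" by simp
  qed
  then show "is_period t p" using h by (simp add: is_period_def)
qed

lemma PP_add_len: "PP t (l + length t) = PP t l + (sum_list t + length t)"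
  using PerT_shift[OF PerT_len, of t l] PP_len[of t] by simp

lemma PP_lt: "l < length t \<Longrightarrow> PP t l < sum_list t + length t"
  using PP_smono[of t] PP_len[of t] by (metis strict_mono_less)

lemma PP_shift_mult: "PP t (l + c * length t) = PP t l + c * (sum_list t + length t)"
proof (induction c)
  case 0 then show ?case by simp
next
  case (Suc c)
  have "PP t (l + Suc c * length t) = PP t ((l + c * length t) + length t)" by (simp add: algebra_simps)
  also have "\<dots> = PP t (l + c * length t) + (sum_list t + length t)" by (rule PP_add_len)
  finally show ?case using Suc by simp
qed

lemma PP_decomp: "PP t l = PP t (l mod length t) + (l div length t) * (sum_list t + length t)"
  using PP_shift_mult[of t "l mod length t" "l div length t"] by (simp add: mod_div_mult_eq)

lemma PP_mod: assumes "t \<noteq> []" shows "PP t l mod (sum_list t + length t) = PP t (l mod length t)"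
proof -
  have "PP t (l mod length t) < sum_list t + length t" using assms by (intro PP_lt) simp
  then show ?thesis by (subst PP_decomp) simp
qed

lemma E_iff: assumes "t \<noteq> []"
  shows "y \<in> range (PP t) \<longleftrightarrow> y mod (sum_list t + length t) \<in> PP t ` {..<length t}"
proof
  assume "y \<in> range (PP t)"
  then obtain l where "y = PP t l" by auto
  then show "y mod (sum_list t + length t) \<in> PP t ` {..<length t}"
    using PP_mod[OF assms, of l] assms by auto
next
  let ?n = "sum_list t + length t"
  assume "y mod ?n \<in> PP t ` {..<length t}"
  then obtain l where l: "y mod ?n = PP t l" by auto
  have "PP t (l + (y div ?n) * length t) = PP t l + (y div ?n) * ?n"
    by (rule PP_shift_mult)
  also have "\<dots> = y mod ?n + (y div ?n) * ?n" using l by simp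
  also have "\<dots> = y" by (simp add: mod_div_mult_eq)
  finally show "y \<in> range (PP t)" by (metis rangeI)
qed

lemma shift_PP:
  assumes inv: "\<forall>y. y \<in> range (PP t) \<longleftrightarrow> y + k \<in> range (PP t)" and m: "PP t m = k"
  shows "PP t (l + m) = PP t l + k"
proof (induction l)
  case 0 then show ?case using m by simp
next
  case (Suc l)
  have sm: "strict_mono (PP t)" by (rule PP_smono)
  have "PP t (Suc l) + k \<in> range (PP t)" using inv by blast
  then obtain a where a: "PP t a = PP t (Suc l) + k" by (metis rangeE)
  have "PP t (l + m) < PP t a" using a Suc sm by (simp add: strict_mono_less)
  then have "l + m < a" using sm by (simp add: strict_mono_less)
  then have "PP t (Suc (l + m)) \<le> PP t a" using sm by (simp add: strict_mono_less_eq)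
  then have le1: "PP t (Suc l + m) \<le> PP t (Suc l) + k" using a by simp
  have gt: "PP t (Suc (l + m)) > PP t l + k" using Suc sm by (metis lessI strict_mono_less)
  then have "(PP t (Suc (l + m)) - k) + k \<in> range (PP t)" by simp
  then have "PP t (Suc (l + m)) - k \<in> range (PP t)" using inv by blast
  then obtain b where b: "PP t b = PP t (Suc (l + m)) - k" by (metis rangeE)
  have "PP t l < PP t b" using b gt by simp
  then have "l < b" using sm by (simp add: strict_mono_less)
  then have "PP t (Suc l) \<le> PP t b" using sm by (simp add: strict_mono_less_eq)
  then have "PP t (Suc l) + k \<le> PP t (Suc l + m)" using b gt by simp
  with le1 show ?case by simp
qed

lemma period_props: assumes "t \<noteq> []"
  shows "is_period t (period t)" "\<And>p. is_period t p \<Longrightarrow> period t \<le> p"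
proof -
  have "is_period t (length t)" using assms by (simp add: is_period_iff PerT_len Suc_leI)
  then show "is_period t (period t)" unfolding period_def by (rule LeastI)
  show "\<And>p. is_period t p \<Longrightarrow> period t \<le> p" unfolding period_def by (rule Least_le)
qed

lemma inv_dvd:
  assumes ne: "t \<noteq> []" and inv: "\<forall>y. y \<in> range (PP t) \<longleftrightarrow> y + k \<in> range (PP t)"
  shows "PP t (period t) dvd k"
proof (cases "k = 0")
  case True then show ?thesis by simp
next
  case False
  let ?p = "period t"
  have ip: "1 \<le> ?p" "?p \<le> length t" "?p dvd length t" "PerT t ?p"
    using period_props(1)[OF ne] is_period_iff[OF ne] by auto
  have "0 + k \<in> range (PP t)" using inv by (metis PP_0 rangeI)
  then obtain m where m: "PP t m = k" by (metis add_0 rangeE)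
  have m0: "m \<noteq> 0" using m False PP_0 by metis
  have "TT t (l + m) = TT t l" for l
    using shift_PP[OF inv m, of "Suc l"] shift_PP[OF inv m, of l] by (simp add: PP_Suc)
  then have pm: "PerT t m" by (simp add: PerT_def)
  let ?g = "gcd m ?p"
  have pg: "PerT t ?g" by (rule PerT_gcd[OF pm ip(4)])
  have g1: "1 \<le> ?g" using m0 by (simp add: Suc_leI)
  have gp: "?g dvd ?p" by simp
  have "?g \<le> ?p" using gp ip(1) by (simp add: dvd_imp_le)
  moreover have "?g dvd length t" using gp ip(3) by (rule dvd_trans)
  moreover have "?g \<le> length t" using \<open>?g \<le> ?p\<close> ip(2) by simp
  ultimately have "is_period t ?g" using g1 pg is_period_iff[OF ne] by simp
  then have "?p \<le> ?g" by (rule period_props(2)[OF ne])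
  with \<open>?g \<le> ?p\<close> have "?g = ?p" by simp
  then have "?p dvd m" by (metis gcd_dvd1)
  then obtain c where "m = c * ?p" by (metis dvd_def mult.commute)
  then have "k = c * PP t ?p" using m PP_mult[OF ip(4)] by simp
  then show ?thesis by simp
qed

lemma dvd_inv:
  assumes ne: "t \<noteq> []" and "PP t (period t) dvd k"
  shows "\<forall>y. y \<in> range (PP t) \<longleftrightarrow> y + k \<in> range (PP t)"
proof -
  let ?p = "period t" let ?d = "PP t ?p"
  have ip: "PerT t ?p" using period_props(1)[OF ne] is_period_iff[OF ne] by auto
  have one: "y \<in> range (PP t) \<longleftrightarrow> y + ?d \<in> range (PP t)" for y
  proof
    assume "y \<in> range (PP t)"
    then obtain l where "y = PP t l" by auto
    then have "y + ?d = PP t (l + ?p)" using PerT_shift[OF ip] by simp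
    then show "y + ?d \<in> range (PP t)" by simp
  next
    assume "y + ?d \<in> range (PP t)"
    then obtain l where l: "PP t l = y + ?d" by (metis rangeE)
    have "\<not> l < ?p"
    proof
      assume "l < ?p"
      then have "PP t l < ?d" using PP_smono by (metis strict_mono_less)
      with l show False by simp
    qed
    then have "PP t l = PP t (l - ?p) + ?d" using PerT_shift[OF ip, of "l - ?p"] by simp
    then show "y \<in> range (PP t)" using l by (metis add_right_cancel rangeI)
  qed
  have "\<forall>y. y \<in> range (PP t) \<longleftrightarrow> y + c * ?d \<in> range (PP t)" for c
  proof (induction c)
    case 0 then show ?case by simp
  next
    case (Suc c)
    show ?case
    proof
      fix y
      have e: "y + Suc c * ?d = (y + c * ?d) + ?d" by simp
      have "y \<in> range (PP t) \<longleftrightarrow> y + c * ?d \<in> range (PP t)" using Suc.IH by blast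
      moreover have "y + c * ?d \<in> range (PP t) \<longleftrightarrow> (y + c * ?d) + ?d \<in> range (PP t)" by (rule one)
      ultimately show "y \<in> range (PP t) \<longleftrightarrow> y + Suc c * ?d \<in> range (PP t)"
        unfolding e by blast
    qed
  qed
  moreover obtain c where "k = c * ?d" using assms(2) by (metis dvd_def mult.commute)
  ultimately show ?thesis by simp
qed

lemma mod_cancel_nat: "(a + b) mod (n::nat) = (a + c) mod n \<Longrightarrow> b mod n = c mod n"
  using cong_add_lcancel_nat[of a b c n] unfolding cong_def by simp

lemma shift_abs:
  fixes D0 :: "nat set"
  assumes D: "D0 \<subseteq> {..<n}" and k: "k \<le> n"
  shows "(\<lambda>z. (x+z) mod n) ` D0 = (\<lambda>z. (x+k+z) mod n) ` D0 \<longleftrightarrow>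
         (\<forall>y. y mod n \<in> D0 \<longleftrightarrow> (y+k) mod n \<in> D0)"
proof
  assume eq: "(\<lambda>z. (x+z) mod n) ` D0 = (\<lambda>z. (x+k+z) mod n) ` D0"
  show "\<forall>y. y mod n \<in> D0 \<longleftrightarrow> (y+k) mod n \<in> D0"
  proof (intro allI iffI)
    fix y assume y: "y mod n \<in> D0"
    then have "(x+k+y mod n) mod n \<in> (\<lambda>z. (x+z) mod n) ` D0" using eq by auto
    then obtain z where z: "z \<in> D0" "(x+z) mod n = (x+k+y mod n) mod n" by auto
    then have "(x+z) mod n = (x + (y+k)) mod n" by (simp add: mod_add_right_eq add.commute add.left_commute)
    then have "z mod n = (y+k) mod n" by (rule mod_cancel_nat)
    moreover have "z mod n = z" using z D by auto
    ultimately show "(y+k) mod n \<in> D0" using z by simp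
  next
    fix y assume y: "(y+k) mod n \<in> D0"
    then have "(x + (y+k) mod n) mod n \<in> (\<lambda>z. (x+k+z) mod n) ` D0" using eq by auto
    then obtain z where z: "z \<in> D0" "(x+k+z) mod n = (x + (y+k) mod n) mod n" by auto
    then have "((x+k)+z) mod n = ((x+k) + y) mod n" by (simp add: mod_add_right_eq add.commute add.left_commute)
    then have "z mod n = y mod n" by (rule mod_cancel_nat)
    moreover have "z mod n = z" using z D by auto
    ultimately show "y mod n \<in> D0" using z by simp
  qed
next
  assume inv: "\<forall>y. y mod n \<in> D0 \<longleftrightarrow> (y+k) mod n \<in> D0"
  show "(\<lambda>z. (x+z) mod n) ` D0 = (\<lambda>z. (x+k+z) mod n) ` D0"
  proof (intro equalityI subsetI)
    fix w assume "w \<in> (\<lambda>z. (x+z) mod n) ` D0"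
    then obtain z where z: "z \<in> D0" "w = (x+z) mod n" by auto
    have zn: "z < n" using z D by auto
    have "(z + n - k + k) mod n = z" using zn k by simp
    then have "(z + n - k) mod n \<in> D0" using inv z by metis
    moreover have "(x + k + (z + n - k) mod n) mod n = w"
    proof -
      have "(x + k + (z + n - k) mod n) mod n = (x + k + (z + n - k)) mod n" by (simp add: mod_add_right_eq)
      also have "x + k + (z + n - k) = (x + z) + n" using k by simp
      finally show ?thesis using z by simp
    qed
    ultimately show "w \<in> (\<lambda>z. (x+k+z) mod n) ` D0" by (metis image_eqI)
  next
    fix w assume "w \<in> (\<lambda>z. (x+k+z) mod n) ` D0"
    then obtain z where z: "z \<in> D0" "w = (x+k+z) mod n" by auto
    have zn: "z < n" using z D by auto
    have "(z + k) mod n \<in> D0" using inv z zn by (metis mod_less)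
    moreover have "(x + (z + k) mod n) mod n = w" using z by (simp add: mod_add_right_eq add.commute add.left_commute)
    ultimately show "w \<in> (\<lambda>z. (x+z) mod n) ` D0" by (metis image_eqI)
  qed
qed

lemma phi_PP: "i \<le> length t \<Longrightarrow> phi t i = PP t (i - 1)"
  unfolding phi_def PP_def TT_def atLeast0LessThan by (rule sum.cong) auto

lemma modn_nat: "n > 0 \<Longrightarrow> modn n (int a) = (if a mod n = 0 then n else a mod n)"
  unfolding modn_def by (simp add: of_nat_mod[symmetric])

lemma coalition_eq:
  assumes ne: "t \<noteq> []" and n: "n = sum_list t + length t" and x: "1 \<le> x" "x \<le> n"
  shows "coalition n x t = (\<lambda>a. if a = 0 then n else a) ` ((\<lambda>z. (x+z) mod n) ` (PP t ` {..<length t}))"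
proof -
  let ?g = "\<lambda>a. if a = 0 then n else a"
  have n0: "n > 0" using ne n by simp
  have gx: "?g ((x + PP t 0) mod n) = x" using x by (cases "x = n") auto
  have "coalition n x t = {x} \<union> (\<lambda>i. ?g ((x + PP t (i - 1)) mod n)) ` {2..length t}"
  proof -
    have "modn n (int x + int (phi t i)) = ?g ((x + PP t (i - 1)) mod n)" if "i \<in> {2..length t}" for i
    proof -
      have "int x + int (phi t i) = int (x + PP t (i - 1))" using that phi_PP[of i t] by simp
      then show ?thesis using modn_nat[OF n0, of "x + PP t (i - 1)"] by (simp only:)
    qed
    then have "(\<lambda>i. modn n (int x + int (phi t i))) ` {2..length t} = (\<lambda>i. ?g ((x + PP t (i - 1)) mod n)) ` {2..length t}"
      by (intro image_cong[OF refl])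
    then show ?thesis unfolding coalition_def UNION_singleton_eq_range by simp
  qed
  also have "(\<lambda>i. ?g ((x + PP t (i - 1)) mod n)) ` {2..length t} = (\<lambda>l. ?g ((x + PP t l) mod n)) ` {1..<length t}"
  proof -
    have "{1..<length t} = (\<lambda>i. i - 1) ` {2..length t}"
    proof (intro equalityI subsetI)
      fix l assume "l \<in> {1..<length t}"
      then show "l \<in> (\<lambda>i. i - 1) ` {2..length t}" by (intro image_eqI[of _ _ "l+1"]) auto
    qed auto
    then show ?thesis by (simp only: image_image)
  qed
  also have "{x} \<union> \<dots> = (\<lambda>l. ?g ((x + PP t l) mod n)) ` {..<length t}"
  proof -
    have "{..<length t} = insert 0 {1..<length t}" using ne by auto
    then show ?thesis using gx by (simp only: image_insert insert_is_Un[symmetric])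
  qed
  finally show ?thesis by (simp only: image_image)
qed

lemma final_arith:
  fixes d s n p i j :: nat
  assumes ds: "d * s = n * p" and pos: "d > 0" "s > 0" "n > 0" "p > 0" and ij: "i \<le> j" "j \<le> n"
  shows "d dvd (j - i) \<longleftrightarrow> (\<exists>r::int. 0 \<le> r \<and>
       (of_int r :: rat) \<le> (of_nat (n - i) * of_nat s) / (of_nat n * of_nat p) \<and>
       (of_nat j :: rat) = of_nat i + of_int r * (of_nat n * of_nat p / of_nat s))"
proof -
  have dq: "(of_nat n * of_nat p / of_nat s :: rat) = of_nat d"
  proof -
    have "(of_nat d :: rat) * of_nat s = of_nat n * of_nat p" using ds by (metis of_nat_mult)
    then show ?thesis using pos by (simp add: field_simps)
  qed
  have q2: "(of_nat (n - i) * of_nat s) / (of_nat n * of_nat p) = (of_nat (n - i) / of_nat d :: rat)"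
  proof -
    have "(of_nat d :: rat) * of_nat s = of_nat n * of_nat p" using ds by (metis of_nat_mult)
    then show ?thesis using pos by (simp add: field_simps)
  qed
  have dpos: "(of_nat d :: rat) > 0" using pos by simp
  show ?thesis
  proof
    assume "d dvd (j - i)"
    then obtain c where c: "j - i = d * c" by (auto simp: dvd_def)
    show "\<exists>r::int. 0 \<le> r \<and>
       (of_int r :: rat) \<le> (of_nat (n - i) * of_nat s) / (of_nat n * of_nat p) \<and>
       (of_nat j :: rat) = of_nat i + of_int r * (of_nat n * of_nat p / of_nat s)"
    proof (intro exI conjI)
      show "0 \<le> int c" by simp
      have "c * d \<le> n - i" using c ij by (simp add: mult.commute)
      then have "(of_nat c :: rat) * of_nat d \<le> of_nat (n - i)" by (metis of_nat_le_iff of_nat_mult)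
      then show "(of_int (int c) :: rat) \<le> (of_nat (n - i) * of_nat s) / (of_nat n * of_nat p)"
        unfolding q2 using dpos by (simp add: field_simps)
      have "j = i + c * d" using c ij by (simp add: mult.commute)
      then show "(of_nat j :: rat) = of_nat i + of_int (int c) * (of_nat n * of_nat p / of_nat s)"
        unfolding dq by simp
    qed
  next
    assume "\<exists>r::int. 0 \<le> r \<and>
       (of_int r :: rat) \<le> (of_nat (n - i) * of_nat s) / (of_nat n * of_nat p) \<and>
       (of_nat j :: rat) = of_nat i + of_int r * (of_nat n * of_nat p / of_nat s)"
    then obtain r :: int where r: "0 \<le> r" "(of_nat j :: rat) = of_nat i + of_int r * of_nat d"
      unfolding dq by blast
    have "(of_int (int j) :: rat) = of_int (int i + r * int d)" using r(2) by simp
    then have "int j = int i + r * int d" by (metis of_int_eq_iff)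
    moreover have "r * int d \<ge> 0" using r(1) by simp
    ultimately have "int (j - i) = r * int d" by linarith
    then have "j - i = nat (r * int d)" by linarith
    then have "j - i = nat r * d" using r(1) by (simp add: nat_mult_distrib)
    then show "d dvd (j - i)" by simp
  qed
qed

theorem theorem6:
  fixes n s :: nat and t :: "nat list" and i j :: nat
  assumes "is_IA n s t"
    and "1 \<le> i" and "i \<le> j" and "j \<le> n"
  shows "coalition n i t = coalition n j t \<longleftrightarrow>
    (\<exists>r::int. 0 \<le> r \<and>
       (of_int r :: rat) \<le> (of_nat (n - i) * of_nat s) / (of_nat n * of_nat (period t)) \<and>
       (of_nat j :: rat) = of_nat i + of_int r * (of_nat n * of_nat (period t) / of_nat s))"
proof -
  have sl: "length t = s" and s1: "1 \<le> s" and sn: "s \<le> n" and sumt: "sum_list t = n - s"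
    using assms(1) by (auto simp: is_IA_def)
  have ne: "t \<noteq> []" using sl s1 by auto
  have nn: "n = sum_list t + length t" using sl sn sumt by simp
  have n0: "n > 0" using s1 sn by simp
  define D0 where "D0 = PP t ` {..<length t}"
  define g where "g = (\<lambda>a::nat. if a = 0 then n else a)"
  define A where "A = (\<lambda>x. (\<lambda>z. (x+z) mod n) ` D0)"
  have D0n: "D0 \<subseteq> {..<n}" unfolding D0_def nn using PP_lt by auto
  have injg: "inj_on g {..<n}" unfolding g_def inj_on_def by auto
  have An: "A x \<subseteq> {..<n}" for x unfolding A_def using n0 by auto
  have CA: "coalition n x t = g ` A x" if "1 \<le> x" "x \<le> n" for x
    unfolding g_def A_def D0_def using coalition_eq[OF ne nn that] .
  define k where "k = j - i"
  have jk: "j = i + k" using assms k_def by simp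
  have kn: "k \<le> n" using assms k_def by simp
  have "coalition n i t = coalition n j t \<longleftrightarrow> A i = A j"
    using CA[of i] CA[of j] assms inj_on_image_eq_iff[OF injg An An] by simp
  also have "\<dots> \<longleftrightarrow> (\<forall>y. y mod n \<in> D0 \<longleftrightarrow> (y+k) mod n \<in> D0)"
    unfolding A_def jk using shift_abs[OF D0n kn, of i] by simp
  also have "\<dots> \<longleftrightarrow> (\<forall>y. y \<in> range (PP t) \<longleftrightarrow> y + k \<in> range (PP t))"
    unfolding D0_def nn using E_iff[OF ne] by simp
  also have "\<dots> \<longleftrightarrow> PP t (period t) dvd k"
    using inv_dvd[OF ne] dvd_inv[OF ne] by blast
  also have "\<dots> \<longleftrightarrow> (\<exists>r::int. 0 \<le> r \<and>
       (of_int r :: rat) \<le> (of_nat (n - i) * of_nat s) / (of_nat n * of_nat (period t)) \<and>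
       (of_nat j :: rat) = of_nat i + of_int r * (of_nat n * of_nat (period t) / of_nat s))"
  proof -
    let ?p = "period t" let ?d = "PP t ?p"
    have ip: "1 \<le> ?p" "?p dvd length t" "PerT t ?p"
      using period_props(1)[OF ne] is_period_iff[OF ne] by auto
    obtain q where q: "length t = ?p * q" using ip(2) by (auto simp: dvd_def)
    have "PP t (length t) = q * ?d" using q PP_mult[OF ip(3), of q] by (simp add: mult.commute)
    then have nq: "n = q * ?d" using nn PP_len[of t] by simp
    have ds: "?d * s = n * ?p" using nq q sl by (simp add: algebra_simps)
    have dpos: "?d > 0" using ip(1) PP_smono[of t] by (metis PP_0 strict_mono_less less_le_trans zero_less_one)
    show ?thesis unfolding k_def
      using final_arith[OF ds dpos _ n0 _ assms(3,4)] s1 ip(1) by simp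
  qed
  finally show ?thesis .
qed

end
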